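(* For any real $r \in [0,1]$, the sequence $\left(c_q^{1/(q+r)}\right)_{q \geq 2}$ is strictly decreasing.
   Context: For integers $q \geq 1$, $c_q := \sqrt{\lfloor (q+2)^2/4 \rfloor}$. *)

theory Defs
  imports Complex_Main
begin

definition c :: "nat \<Rightarrow> real" where
  "c q = sqrt (real (((q + 2)^2) div 4))"

end

theory Submission
  imports Defs
begin

lemma key_real:
  fixes n :: nat assumes "n \<ge> 3"
  shows "(1 + 1 / real n) ^ (2*n - 1) < (real n)^2"
proof -
  have n0: "real n > 0" using assms by simp
  have "(1 + 1 / real n) ^ (2*n - 1) \<le> exp (1 / real n) ^ (2*n - 1)"
    by (rule power_mono) (use n0 in auto)
  also have "\<dots> = exp (real (2*n - 1) / real n)"
    by (simp add: exp_of_nat_mult[symmetric])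
  also have "\<dots> < exp 2"
  proof -
    have "real (2*n - 1) < 2 * real n" using assms by (simp add: of_nat_diff)
    hence "real (2*n - 1) / real n < 2" using n0 by (simp add: divide_simps)
    thus ?thesis by simp
  qed
  also have "exp (2::real) = exp 1 ^ 2" by (simp add: exp_of_nat_mult[symmetric])
  also have "\<dots> \<le> 3 ^ 2" by (rule power_mono) (use exp_le in auto)
  also have "(3::real) ^ 2 \<le> (real n)^2" by (rule power_mono) (use assms in auto)
  finally show ?thesis .
qed

lemma key_nat:
  fixes n :: nat assumes "n \<ge> 2"
  shows "(n+1)^(2*n-1) < n^(2*n+1)"
proof (cases "n = 2")
  case True thus ?thesis by simp
next
  case False
  hence n3: "n \<ge> 3" using assms by simp
  have n0: "real n > 0" using assms by simp
  have e: "real n * (1 + 1 / real n) = real (n+1)" using n0 by (simp add: field_simps)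
  have "real ((n+1)^(2*n-1)) = (real n * (1 + 1 / real n)) ^ (2*n-1)"
    unfolding e by simp
  also have "\<dots> = real n ^ (2*n-1) * (1 + 1 / real n) ^ (2*n-1)"
    by (simp add: power_mult_distrib)
  also have "\<dots> < real n ^ (2*n-1) * (real n)^2"
    using key_real[OF n3] n0 by simp
  also have "\<dots> = real n ^ (2*n+1)"
    using assms by (simp add: power_add[symmetric])
  finally have "real ((n+1)^(2*n-1)) < real (n^(2*n+1))" by simp
  thus ?thesis by linarith
qed

definition a :: "nat \<Rightarrow> nat" where "a q = ((q + 2)^2) div 4"

lemma c_a: "c q = sqrt (real (a q))" unfolding c_def a_def by simp

lemma a_even: "a (2*m) = (m+1)^2"
proof -
  have "(2*m+2)^2 = 4 * (m+1)^2" by (simp add: power2_eq_square algebra_simps)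
  thus ?thesis unfolding a_def by simp
qed

lemma a_odd: "a (2*m+1) = (m+1)*(m+2)"
proof -
  have "(2*m+1+2)^2 = 1 + 4 * ((m+1)*(m+2))" by (simp add: power2_eq_square algebra_simps)
  thus ?thesis unfolding a_def by simp
qed

lemma a_pos: "a q \<ge> 1" unfolding a_def
proof -
  have "4 \<le> (q+2)^2" using power_mono[of 2 "q+2" 2] by simp
  thus "1 \<le> (q + 2)\<^sup>2 div 4" by simp
qed

lemma a_mono: "a q \<le> a (Suc q)"
  unfolding a_def by (intro div_le_mono power_mono) auto

lemma key_a:
  assumes "q \<ge> 2"
  shows "a (Suc q) ^ (q+1) < a q ^ (q+2)"
proof (cases "even q")
  case True
  then obtain m where q: "q = 2*m" by auto
  with assms have m: "m \<ge> 1" by simp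
  have k0: "(m+1+1)^(2*(m+1)-1) < (m+1)^(2*(m+1)+1)" by (rule key_nat) (use m in simp)
  have e1: "m+1+1 = m+2" "2*(m+1)-1 = 2*m+1" "2*(m+1)+1 = 2*m+3" by simp_all
  have k: "(m+2)^(2*m+1) < (m+1)^(2*m+3)"
    using k0 unfolding e1 .
  have as: "a (Suc q) = (m+1)*(m+2)" using a_odd[of m] q by simp
  have "a (Suc q) ^ (q+1) = ((m+1)*(m+2))^(2*m+1)" unfolding as using q by simp
  also have "\<dots> = (m+1)^(2*m+1) * (m+2)^(2*m+1)" by (rule power_mult_distrib)
  finally have "a (Suc q) ^ (q+1) = (m+1)^(2*m+1) * (m+2)^(2*m+1)" .
  also have "\<dots> < (m+1)^(2*m+1) * (m+1)^(2*m+3)"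
    using k by simp
  also have "\<dots> = (m+1)^(2*(2*m+2))" 
  proof -
    have ex: "2*m+1+(2*m+3) = 2*(2*m+2)" by simp
    show ?thesis by (simp only: power_add[symmetric] ex)
  qed
  also have "\<dots> = ((m+1)^2)^(2*m+2)" by (rule power_mult)
  also have "\<dots> = a q ^ (q+2)" using a_even[of m] q by simp
  finally show ?thesis .
next
  case False
  then obtain m where q: "q = 2*m+1" by (metis oddE)
  with assms have m: "m \<ge> 1" by simp
  have k0: "(m+1+1)^(2*(m+1)-1) < (m+1)^(2*(m+1)+1)" by (rule key_nat) (use m in simp)
  have e1: "m+1+1 = m+2" "2*(m+1)-1 = 2*m+1" "2*(m+1)+1 = 2*m+3" by simp_all
  have k: "(m+2)^(2*m+1) < (m+1)^(2*m+3)"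
    using k0 unfolding e1 .
  have sq: "Suc q = 2*(m+1)" using q by simp
  have ae: "a (Suc q) = (m+1+1)^2" unfolding sq a_even ..
  have ex: "2*(q+1) = 2*m+1+(2*m+3)" using q by simp
  have "a (Suc q) ^ (q+1) = (m+2)^(2*(q+1))" unfolding ae power_mult by simp
  also have "\<dots> = (m+2)^(2*m+1) * (m+2)^(2*m+3)" unfolding ex by (rule power_add)
  finally have "a (Suc q) ^ (q+1) = (m+2)^(2*m+1) * (m+2)^(2*m+3)" .
  also have "\<dots> < (m+1)^(2*m+3) * (m+2)^(2*m+3)"
    using k by simp
  also have "\<dots> = ((m+1)*(m+2))^(2*m+3)" by (rule power_mult_distrib[symmetric])
  also have "\<dots> = a q ^ (q+2)"
  proof -
    have aq: "a q = (m+1)*(m+2)" using a_odd[of m] q by simp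
    have "q+2 = 2*m+3" using q by simp
    thus ?thesis unfolding aq by (simp only:)
  qed
  finally show ?thesis .
qed

lemma step:
  fixes r :: real
  assumes "0 \<le> r" and "r \<le> 1" and "q \<ge> 2"
  shows "c (Suc q) powr (1 / (real (Suc q) + r)) < c q powr (1 / (real q + r))"
proof -
  define L where "L k = ln (real (a k))" for k
  have apos: "real (a k) > 0" for k using a_pos[of k] by simp
  have Lq: "L q > 0" unfolding L_def using a_pos[of q] a_mono[of 1] assms(3)
  proof -
    have "a q \<ge> a 2" using assms(3)
    proof (induction q rule: dec_induct)
      case (step n) thus ?case using a_mono[of n] by simp
    qed simp
    moreover have "a 2 = 4" unfolding a_def by simp
    ultimately show "ln (real (a q)) > 0" by simp
  qed
  have Lm: "L q \<le> L (Suc q)" unfolding L_def using a_mono[of q] apos by simp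
  have "real (a (Suc q) ^ (q+1)) < real (a q ^ (q+2))" using key_a[OF assms(3)] by linarith
  hence "ln (real (a (Suc q)) ^ (q+1)) < ln (real (a q) ^ (q+2))"
    using apos by (simp del: power_Suc of_nat_add add: of_nat_power)
  moreover have "ln (real (a (Suc q)) ^ (q+1)) = real (q+1) * L (Suc q)"
    unfolding L_def by (rule ln_realpow)
  moreover have "ln (real (a q) ^ (q+2)) = real (q+2) * L q"
    unfolding L_def by (rule ln_realpow)
  ultimately have k: "real (q+1) * L (Suc q) < real (q+2) * L q" by simp
  have ineq: "(real q + r) * L (Suc q) < (real q + 1 + r) * L q"
  proof -
    have "(real q + r) * L (Suc q) = real (q+1) * L (Suc q) - (1 - r) * L (Suc q)"
      by (simp add: algebra_simps)
    also have "(1 - r) * L q \<le> (1 - r) * L (Suc q)"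
      using Lm assms by (intro mult_left_mono) auto
    hence "real (q+1) * L (Suc q) - (1 - r) * L (Suc q) < real (q+2) * L q - (1 - r) * L q"
      using k by linarith
    also have "\<dots> = (real q + 1 + r) * L q" by (simp add: algebra_simps)
    finally show ?thesis .
  qed
  have d1: "real q + r > 0" using assms by simp
  have lc: "ln (c k) = L k / 2" for k
    unfolding c_a L_def using apos by (simp add: ln_sqrt)
  have cpos: "c k > 0" for k unfolding c_a using apos by simp
  have "ln (c (Suc q)) / (real (Suc q) + r) < ln (c q) / (real q + r)"
    unfolding lc using ineq d1 by (simp add: divide_simps algebra_simps)
  thus ?thesis using cpos unfolding powr_def by (simp add: cpos[THEN less_imp_neq, symmetric])
qed

theorem lemma2p12:
  fixes r :: real
  assumes "0 \<le> r" and "r \<le> 1"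
  shows "strict_antimono_on {2..} (\<lambda>q::nat. c q powr (1 / (real q + r)))"
proof (rule monotone_onI)
  fix x y :: nat assume x: "x \<in> {2..}" and "y \<in> {2..}" and xy: "x < y"
  from xy have "Suc x \<le> y" by simp
  thus "c y powr (1 / (real y + r)) < c x powr (1 / (real x + r))"
  proof (induction y rule: dec_induct)
    case base thus ?case using step[OF assms, of x] x by simp
  next
    case (step n)
    have "c (Suc n) powr (1 / (real (Suc n) + r)) < c n powr (1 / (real n + r))"
      using Submission.step[OF assms, of n] step.hyps x by simp
    thus ?case using step.IH by linarith
  qed
qed

end
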